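(* Let $R=\mathbb C[S_1,\ldots,S_n]/I$ be a local algebra of dimension $n+2$ which is an $n$-factor, with a proper basis $\mu_1,\ldots,\mu_{n+2}$ (so $\mu_1=1$ and $\mu_2,\ldots,\mu_{n+1}$ are the images of $S_1,\ldots,S_n$). Suppose $B$ is a nondegenerate symmetric bilinear form on $R$ satisfying $B(\mu_ix,y)+B(x,\mu_iy)=0$ for all $i=2,\ldots,n+1$ and $x,y\in R$, and $B(1,1)=0$. Then: (1) $B(1,\mu_i)=0$ for $i=2,\ldots,n+1$; (2) $B(\mu_i,\mu_j)=-B(1,\mu_i\mu_j)$ for $i,j=2,\ldots,n+1$; (3) $B(\mu_i,\mu_{n+2})=0$ for $i=2,\ldots,n+2$, and $B(1,\mu_{n+2})\neq0$; (4) $\dim_{\mathbb C}\mathfrak m_R^2=1$ and $\mathfrak m_R^2=\langle\mu_{n+2}\rangle$; (5) if $B$ is normalized so that $B(1,\mu_{n+2})=-1$, then $B=B_0$.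
   Context: A local algebra means a finite-dimensional commutative associative unital $\mathbb C$-algebra with a unique maximal ideal $\mathfrak m_R$ and residue field $\mathbb C$. An $n$-factor is a quotient $\mathbb C[S_1,\ldots,S_n]/I$ in which the images of $S_1,\ldots,S_n$ are linearly independent (they lie in $\mathfrak m_R$). A $\mathbb C$-basis $\mu_1,\ldots,\mu_{n+2}$ of an $n$-factor $R$ is proper if $\mu_1=1$, $\mu_2,\ldots,\mu_{n+1}$ are the images of $S_1,\ldots,S_n$, $\mu_{n+2}$ can be expressed as a polynomial in $\mu_2,\ldots,\mu_{n+1}$, and every power $\mathfrak m_R^k$ is spanned by a subset of the basis vectors. When $\mathfrak m_R^2=\langle\mu_{n+2}\rangle$ is one-dimensional, $B_0$ is the symmetric bilinear form on $R$ defined by $B_0(\mu_1,\mu_j)=-\delta_{j,n+2}$ for all $j$, $B_0(\mu_i,\mu_{n+2})=-\delta_{i,1}$ for all $i$, and $B_0(\mu_i,\mu_j)=a_{ij}$ for $i,j=2,\ldots,n+1$, where $\mu_i\mu_j=a_{ij}\mu_{n+2}$ ($\delta$ is the Kronecker delta). *)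

theory Defs
  imports Complex_Main
begin

text \<open>A commutative unital C-algebra is modelled as a type 'a of class comm_ring_1
  together with a scalar multiplication sc by complex numbers making it a complex
  vector space compatible with the ring multiplication.\<close>

definition calg :: "(complex \<Rightarrow> 'a::comm_ring_1 \<Rightarrow> 'a) \<Rightarrow> bool" where
  "calg sc \<longleftrightarrow> vector_space sc \<and> (\<forall>c x y. sc c (x * y) = sc c x * y)"

definition is_ideal :: "'a::comm_ring_1 set \<Rightarrow> bool" where
  "is_ideal I \<longleftrightarrow> 0 \<in> I \<and> (\<forall>x\<in>I. \<forall>y\<in>I. x + y \<in> I) \<and> (\<forall>r. \<forall>x\<in>I. r * x \<in> I)"

definition is_maximal_ideal :: "'a::comm_ring_1 set \<Rightarrow> bool" where
  "is_maximal_ideal M \<longleftrightarrow> is_ideal M \<and> M \<noteq> UNIV \<and>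
     (\<forall>J. is_ideal J \<and> M \<subseteq> J \<longrightarrow> J = M \<or> J = UNIV)"

text \<open>The maximal ideal m_R of a local ring (meaningful when it is unique).\<close>
definition max_ideal :: "'a::comm_ring_1 set" where
  "max_ideal = (THE M. is_maximal_ideal M)"

text \<open>Local algebra: finite-dimensional, unique maximal ideal, residue field C.\<close>
definition local_algebra :: "(complex \<Rightarrow> 'a::comm_ring_1 \<Rightarrow> 'a) \<Rightarrow> bool" where
  "local_algebra sc \<longleftrightarrow> calg sc \<and>
     (\<exists>B. finite B \<and> module.span sc B = UNIV) \<and>
     (\<exists>!M. is_maximal_ideal (M :: 'a set)) \<and>
     (\<forall>x. \<exists>c. x - sc c 1 \<in> max_ideal)"

fun ideal_pow :: "(complex \<Rightarrow> 'a::comm_ring_1 \<Rightarrow> 'a) \<Rightarrow> 'a set \<Rightarrow> nat \<Rightarrow> 'a set" where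
  "ideal_pow sc M 0 = UNIV"
| "ideal_pow sc M (Suc k) = module.span sc {x * y | x y. x \<in> M \<and> y \<in> ideal_pow sc M k}"

inductive_set gen_alg :: "(complex \<Rightarrow> 'a::comm_ring_1 \<Rightarrow> 'a) \<Rightarrow> 'a set \<Rightarrow> 'a set"
  for sc :: "complex \<Rightarrow> 'a \<Rightarrow> 'a" and S :: "'a set" where
  one: "1 \<in> gen_alg sc S"
| gen: "s \<in> S \<Longrightarrow> s \<in> gen_alg sc S"
| add: "x \<in> gen_alg sc S \<Longrightarrow> y \<in> gen_alg sc S \<Longrightarrow> x + y \<in> gen_alg sc S"
| mult: "x \<in> gen_alg sc S \<Longrightarrow> y \<in> gen_alg sc S \<Longrightarrow> x * y \<in> gen_alg sc S"
| scale: "x \<in> gen_alg sc S \<Longrightarrow> sc c x \<in> gen_alg sc S"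

text \<open>R is an n-factor with the images of S_1..S_n being mu 2, ..., mu (n+1):
  i.e. R = C[S_1..S_n]/I (the evaluation map S_i |-> mu (i+1) is surjective,
  i.e. these elements generate R as a C-algebra), and the images are linearly
  independent and lie in m_R.\<close>
definition n_factor :: "(complex \<Rightarrow> 'a::comm_ring_1 \<Rightarrow> 'a) \<Rightarrow> nat \<Rightarrow> (nat \<Rightarrow> 'a) \<Rightarrow> bool" where
  "n_factor sc n s \<longleftrightarrow> gen_alg sc (s ` {2..n+1}) = UNIV \<and>
     inj_on s {2..n+1} \<and> \<not> module.dependent sc (s ` {2..n+1}) \<and>
     s ` {2..n+1} \<subseteq> max_ideal"

definition proper_basis :: "(complex \<Rightarrow> 'a::comm_ring_1 \<Rightarrow> 'a) \<Rightarrow> nat \<Rightarrow> (nat \<Rightarrow> 'a) \<Rightarrow> bool" where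
  "proper_basis sc n mu \<longleftrightarrow>
     inj_on mu {1..n+2} \<and> \<not> module.dependent sc (mu ` {1..n+2}) \<and>
     module.span sc (mu ` {1..n+2}) = UNIV \<and>
     mu 1 = 1 \<and>
     mu (n+2) \<in> gen_alg sc (mu ` {2..n+1}) \<and>
     (\<forall>k. \<exists>J \<subseteq> {1..n+2}. ideal_pow sc max_ideal k = module.span sc (mu ` J))"

definition bilinear_form :: "(complex \<Rightarrow> 'a::comm_ring_1 \<Rightarrow> 'a) \<Rightarrow> ('a \<Rightarrow> 'a \<Rightarrow> complex) \<Rightarrow> bool" where
  "bilinear_form sc B \<longleftrightarrow>
     (\<forall>x y z. B (x + y) z = B x z + B y z) \<and> (\<forall>c x y. B (sc c x) y = c * B x y) \<and>
     (\<forall>x y z. B x (y + z) = B x y + B x z) \<and> (\<forall>c x y. B x (sc c y) = c * B x y)"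

definition symmetric_form :: "('a \<Rightarrow> 'a \<Rightarrow> complex) \<Rightarrow> bool" where
  "symmetric_form B \<longleftrightarrow> (\<forall>x y. B x y = B y x)"

definition nondegenerate :: "('a::zero \<Rightarrow> 'a \<Rightarrow> complex) \<Rightarrow> bool" where
  "nondegenerate B \<longleftrightarrow> (\<forall>x. (\<forall>y. B x y = 0) \<longrightarrow> x = 0)"

definition coord :: "(complex \<Rightarrow> 'a::comm_ring_1 \<Rightarrow> 'a) \<Rightarrow> nat \<Rightarrow> (nat \<Rightarrow> 'a) \<Rightarrow> 'a \<Rightarrow> nat \<Rightarrow> complex" where
  "coord sc n mu v k = module.representation sc (mu ` {1..n+2}) v (mu k)"

text \<open>The form B_0 (when m_R^2 = <mu (n+2)>): a_ij is the coefficient with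
  mu i * mu j = a_ij mu (n+2); B_0 is the symmetric bilinear form with
  B_0(mu 1, mu j) = -delta_{j,n+2}, B_0(mu i, mu (n+2)) = -delta_{i,1},
  B_0(mu i, mu j) = a_ij for 2 <= i,j <= n+1.\<close>
definition B0 :: "(complex \<Rightarrow> 'a::comm_ring_1 \<Rightarrow> 'a) \<Rightarrow> nat \<Rightarrow> (nat \<Rightarrow> 'a) \<Rightarrow> 'a \<Rightarrow> 'a \<Rightarrow> complex" where
  "B0 sc n mu x y =
     - (coord sc n mu x 1 * coord sc n mu y (n+2)) - (coord sc n mu x (n+2) * coord sc n mu y 1)
     + (\<Sum>i\<in>{2..n+1}. \<Sum>j\<in>{2..n+1}.
          coord sc n mu (mu i * mu j) (n+2) * coord sc n mu x i * coord sc n mu y j)"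

end

theory Submission
  imports Defs
begin


lemma calg_sc1:
  assumes "calg sc" shows "sc c x = sc c 1 * x"
proof -
  have "sc c (1 * x) = sc c 1 * x" using assms unfolding calg_def by blast
  then show ?thesis by simp
qed

lemma ideal_subspace:
  assumes "calg sc" "is_ideal I" shows "module.subspace sc I"
proof -
  interpret vector_space sc using assms(1) unfolding calg_def by blast
  show ?thesis unfolding subspace_def
  proof (intro conjI ballI allI)
    show "0 \<in> I" using assms(2) unfolding is_ideal_def by blast
    show "x + y \<in> I" if "x \<in> I" "y \<in> I" for x y
      using assms(2) that unfolding is_ideal_def by blast
    show "sc c x \<in> I" if "x \<in> I" for c x
    proof -
      have "sc c 1 * x \<in> I" using assms(2) that unfolding is_ideal_def by blast
      then show ?thesis using calg_sc1[OF assms(1), of c x] by simp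
    qed
  qed
qed

lemma ideal_UNIV: assumes "is_ideal I" "1 \<in> I" shows "I = UNIV"
  using assms unfolding is_ideal_def by (metis UNIV_eq_I mult_1_right)

lemma exists_max_ideal:
  fixes sc :: "complex \<Rightarrow> 'a::comm_ring_1 \<Rightarrow> 'a"
  assumes fd: "finite_dimensional_vector_space sc Bs" and ca: "calg sc"
    and I: "is_ideal (I::'a set)" "I \<noteq> UNIV"
  shows "\<exists>J. is_maximal_ideal J \<and> I \<subseteq> J"
proof -
  interpret fd: finite_dimensional_vector_space sc Bs by (rule fd)
  define P where "P J \<longleftrightarrow> is_ideal J \<and> J \<noteq> UNIV \<and> I \<subseteq> J" for J :: "'a set"
  have "P I" using I by (simp add: P_def)
  moreover have "\<forall>J. P J \<longrightarrow> fd.dim J < Suc fd.dimension"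
    using fd.dim_subset_UNIV by (simp add: less_Suc_eq_le)
  ultimately have "\<exists>J. P J \<and> (\<forall>J'. P J' \<longrightarrow> fd.dim J' \<le> fd.dim J)"
    by (rule ex_has_greatest_nat)
  then obtain J where J: "P J" and Jg: "\<forall>J'. P J' \<longrightarrow> fd.dim J' \<le> fd.dim J"
    by blast
  have "is_maximal_ideal J"
    unfolding is_maximal_ideal_def
  proof (intro conjI allI impI)
    show "is_ideal J" "J \<noteq> UNIV" using J by (auto simp: P_def)
    fix J' assume h: "is_ideal J' \<and> J \<subseteq> J'"
    show "J' = J \<or> J' = UNIV"
    proof (cases "J' = UNIV")
      case False
      then have "P J'" using h J by (auto simp: P_def)
      then have "fd.dim J' \<le> fd.dim J" using Jg by blast
      then have "fd.span J = fd.span J'" using fd.dim_eq_span h by blast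
      moreover have "fd.subspace J" "fd.subspace J'"
        using ideal_subspace[OF ca] h J by (auto simp: P_def)
      ultimately show ?thesis by (metis fd.span_eq_iff)
    qed simp
  qed
  then show ?thesis using J by (auto simp: P_def)
qed



lemma split3:
  fixes F :: "nat \<Rightarrow> 'b::comm_monoid_add"
  shows "(\<Sum>k\<in>{1..n+2}. F k) = F 1 + F (n+2) + (\<Sum>k\<in>{2..n+1}. F k)"
proof -
  have "{1..n+2} = insert 1 (insert (n+2) {2..n+1})" by auto
  then show ?thesis by (simp add: add.assoc)
qed

theorem lemma6:
  fixes sc :: "complex \<Rightarrow> 'a::comm_ring_1 \<Rightarrow> 'a"
    and n :: nat and mu :: "nat \<Rightarrow> 'a" and B :: "'a \<Rightarrow> 'a \<Rightarrow> complex"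
  assumes loc: "local_algebra sc"
    and dimR: "vector_space.dim sc (UNIV :: 'a set) = n + 2"
    and nfac: "n_factor sc n mu"
    and pb: "proper_basis sc n mu"
    and bil: "bilinear_form sc B"
    and sym: "symmetric_form B"
    and nd: "nondegenerate B"
    and inv: "\<And>i x y. i \<in> {2..n+1} \<Longrightarrow> B (mu i * x) y + B x (mu i * y) = 0"
    and B11: "B 1 1 = 0"
  shows "(\<forall>i\<in>{2..n+1}. B 1 (mu i) = 0)
    \<and> (\<forall>i\<in>{2..n+1}. \<forall>j\<in>{2..n+1}. B (mu i) (mu j) = - B 1 (mu i * mu j))
    \<and> (\<forall>i\<in>{2..n+2}. B (mu i) (mu (n+2)) = 0) \<and> B 1 (mu (n+2)) \<noteq> 0
    \<and> vector_space.dim sc (ideal_pow sc max_ideal 2) = 1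
    \<and> ideal_pow sc max_ideal 2 = module.span sc {mu (n+2)}
    \<and> (B 1 (mu (n+2)) = -1 \<longrightarrow> B = B0 sc n mu)"
proof -
  have ca: "calg sc" using loc unfolding local_algebra_def by blast
  interpret vs: vector_space sc using ca unfolding calg_def by blast
  have scm: "\<And>c x y. sc c (x*y) = sc c x * y" using ca unfolding calg_def by blast
  have scm2: "\<And>c x y. sc c (x*y) = x * sc c y" using scm by (metis mult.commute)
  have Ba1: "\<And>x y z. B (x + y) z = B x z + B y z"
   and Bs1: "\<And>c x y. B (sc c x) y = c * B x y"
   and Ba2: "\<And>x y z. B x (y + z) = B x y + B x z"
   and Bs2: "\<And>c x y. B x (sc c y) = c * B x y" using bil unfolding bilinear_form_def by blast+
  have Bsym: "\<And>x y. B x y = B y x" using sym unfolding symmetric_form_def by blast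
  have B01: "\<And>y. B 0 y = 0" using Ba1[of 0 0] by simp
  have B02: "\<And>x. B x 0 = 0" using Ba2[of _ 0 0] by simp
  have Bd2: "\<And>x y z. B x (y - z) = B x y - B x z"
  proof -
    fix x y z
    have "B x (y - z) + B x z = B x y" using Ba2[of x "y - z" z] by simp
    then show "B x (y - z) = B x y - B x z" by (simp add: eq_diff_eq)
  qed
  have Bd1: "\<And>x y z. B (y - z) x = B y x - B z x" using Bd2 Bsym by metis
  have uniq: "\<exists>!M. is_maximal_ideal (M::'a set)" using loc unfolding local_algebra_def by blast
  have Mmax: "is_maximal_ideal (max_ideal::'a set)" unfolding max_ideal_def using theI'[OF uniq] .
  have Muniq: "\<And>J. is_maximal_ideal (J::'a set) \<Longrightarrow> J = max_ideal" using uniq Mmax by blast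
  have res: "\<And>x. \<exists>c. x - sc c 1 \<in> (max_ideal::'a set)" using loc unfolding local_algebra_def by blast
  define M where "M = (max_ideal::'a set)"
  have Mid: "is_ideal M" and MU: "M \<noteq> UNIV" using Mmax unfolding M_def is_maximal_ideal_def by blast+
  have Msub: "vs.subspace M" using ideal_subspace[OF ca Mid] .
  have Mmul: "\<And>r x. x \<in> M \<Longrightarrow> r * x \<in> M" using Mid unfolding is_ideal_def by blast
  have Mmul2: "\<And>r x. x \<in> M \<Longrightarrow> x * r \<in> M" using Mmul by (metis mult.commute)
  have one_M: "1 \<notin> M" using ideal_UNIV[OF Mid] MU by blast
  have scM: "\<And>a x. a \<noteq> 0 \<Longrightarrow> sc a x \<in> M \<Longrightarrow> x \<in> M"
  proof -
    fix a x assume a: "a \<noteq> 0" "sc a x \<in> M"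
    have "sc (inverse a) (sc a x) \<in> M" using vs.subspace_scale[OF Msub a(2)] .
    then show "x \<in> M" using a(1) by simp
  qed
  define Bs where "Bs = mu ` {1..n+2}"
  have indep: "vs.independent Bs" and spanB: "vs.span Bs = UNIV"
    and injmu: "inj_on mu {1..n+2}" and mu1: "mu 1 = 1"
    and pbJ: "\<forall>k. \<exists>J \<subseteq> {1..n+2}. ideal_pow sc max_ideal k = vs.span (mu ` J)"
    using pb unfolding proper_basis_def Bs_def by blast+
  have finB: "finite Bs" unfolding Bs_def by simp
  interpret fd: finite_dimensional_vector_space sc Bs
  proof (rule finite_dimensional_vector_space.intro)
    show "vector_space sc" using ca unfolding calg_def by blast
    show "finite_dimensional_vector_space_axioms sc Bs"
      unfolding finite_dimensional_vector_space_axioms_def using finB indep spanB by blast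
  qed
  have munz: "\<And>k. k \<in> {1..n+2} \<Longrightarrow> mu k \<noteq> 0"
  proof
    fix k assume "k \<in> {1..n+2}" "mu k = 0"
    then have "0 \<in> Bs" unfolding Bs_def by (metis image_eqI)
    then show False using indep vs.dependent_zero by blast
  qed
  have muM: "\<And>i. i \<in> {2..n+1} \<Longrightarrow> mu i \<in> M" and genU: "gen_alg sc (mu ` {2..n+1}) = UNIV"
    using nfac unfolding n_factor_def M_def by blast+
  have one_nz: "(1::'a) \<noteq> 0" using munz[of 1] mu1 by simp
  define D where "D = {r. \<forall>x y. B (r*x) y = - B x (r*y)}"
  define E where "E = {r. \<forall>x y. B (r*x) y = B x (r*y)}"
  have muD: "\<And>i. i \<in> {2..n+1} \<Longrightarrow> mu i \<in> D" using inv unfolding D_def by (simp add: eq_neg_iff_add_eq_0)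
  have oneE: "1 \<in> E" unfolding E_def by simp
  have Dsub: "vs.subspace D" unfolding vs.subspace_def
  proof (intro conjI ballI allI)
    show "0 \<in> D" by (simp add: D_def B01 B02)
    show "x + y \<in> D" if "x \<in> D" "y \<in> D" for x y
      using that unfolding D_def by (simp add: distrib_right distrib_left Ba1 Ba2)
    show "sc c x \<in> D" if "x \<in> D" for c x
      using that unfolding D_def by (simp add: scm[symmetric] scm2[symmetric] Bs1 Bs2 mult.commute[of _ x])
  qed
  have Esub: "vs.subspace E" unfolding vs.subspace_def
  proof (intro conjI ballI allI)
    show "0 \<in> E" by (simp add: E_def B01 B02)
    show "x + y \<in> E" if "x \<in> E" "y \<in> E" for x y
      using that unfolding E_def by (simp add: distrib_right distrib_left Ba1 Ba2)
    show "sc c x \<in> E" if "x \<in> E" for c x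
      using that unfolding E_def by (simp add: scm[symmetric] scm2[symmetric] Bs1 Bs2 mult.commute[of _ x])
  qed
  have DD: "\<And>r s. r \<in> D \<Longrightarrow> s \<in> D \<Longrightarrow> r * s \<in> E"
    unfolding D_def E_def by (simp add: mult.assoc mult.left_commute)
  have DE: "\<And>r s. r \<in> D \<Longrightarrow> s \<in> E \<Longrightarrow> r * s \<in> D"
    unfolding D_def E_def by (simp add: mult.assoc mult.left_commute)
  have ED: "\<And>r s. r \<in> E \<Longrightarrow> s \<in> D \<Longrightarrow> r * s \<in> D"
    using DE by (metis mult.commute)
  have EE: "\<And>r s. r \<in> E \<Longrightarrow> s \<in> E \<Longrightarrow> r * s \<in> E"
    unfolding E_def by (simp add: mult.assoc mult.left_commute)
  have DE0: "\<And>r. r \<in> D \<Longrightarrow> r \<in> E \<Longrightarrow> r = 0"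
  proof -
    fix r assume r: "r \<in> D" "r \<in> E"
    have "\<forall>y. B r y = 0"
    proof
      fix y
      have "B (r*1) y = - B 1 (r*y)" "B (r*1) y = B 1 (r*y)" using r unfolding D_def E_def by blast+
      then show "B r y = 0" by simp
    qed
    then show "r = 0" using nd unfolding nondegenerate_def by blast
  qed
  have dec: "\<And>x. \<exists>e d. e \<in> E \<and> d \<in> D \<and> x = e + d"
  proof -
    fix x :: 'a
    have "x \<in> gen_alg sc (mu ` {2..n+1})" using genU by simp
    then show "\<exists>e d. e \<in> E \<and> d \<in> D \<and> x = e + d"
    proof (induction rule: gen_alg.induct)
      case one then show ?case using oneE vs.subspace_0[OF Dsub] by force
    next
      case (gen s) then show ?case using muD vs.subspace_0[OF Esub] by force
    next
      case (add x y)
      then obtain ex dx ey dy where h: "ex \<in> E" "dx \<in> D" "x = ex + dx" "ey \<in> E" "dy \<in> D" "y = ey + dy" by blast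
      show ?case
        by (rule exI[of _ "ex + ey"], rule exI[of _ "dx + dy"])
           (simp add: h vs.subspace_add[OF Esub] vs.subspace_add[OF Dsub] algebra_simps)
    next
      case (mult x y)
      then obtain ex dx ey dy where h: "ex \<in> E" "dx \<in> D" "x = ex + dx" "ey \<in> E" "dy \<in> D" "y = ey + dy" by blast
      show ?case
        by (rule exI[of _ "ex * ey + dx * dy"], rule exI[of _ "ex * dy + dx * ey"])
           (simp add: h vs.subspace_add[OF Esub] vs.subspace_add[OF Dsub] EE DD ED DE algebra_simps)
    next
      case (scale x c)
      then obtain ex dx where h: "ex \<in> E" "dx \<in> D" "x = ex + dx" by blast
      show ?case
        by (rule exI[of _ "sc c ex"], rule exI[of _ "sc c dx"])
           (simp add: h vs.subspace_scale[OF Esub] vs.subspace_scale[OF Dsub] vs.scale_right_distrib)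
    qed
  qed
  have orth: "\<And>e d. e \<in> E \<Longrightarrow> d \<in> D \<Longrightarrow> B e d = 0"
  proof -
    fix e d assume h: "e \<in> E" "d \<in> D"
    have h1: "B (e*1) d = B 1 (e*d)" and h2: "B (d*1) e = - B 1 (d*e)" using h unfolding D_def E_def by blast+
    then have "B 1 (e*d) = - B 1 (e*d)" using Bsym[of e d] by (simp add: mult.commute)
    then have "B 1 (e*d) = 0" by simp
    then show "B e d = 0" using h1 by simp
  qed
  have B1D: "\<And>d. d \<in> D \<Longrightarrow> B 1 d = 0"
    using orth oneE by blast
  have P1: "\<forall>i\<in>{2..n+1}. B 1 (mu i) = 0" using B1D muD by blast
  have P2: "\<forall>i\<in>{2..n+1}. \<forall>j\<in>{2..n+1}. B (mu i) (mu j) = - B 1 (mu i * mu j)"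
  proof (intro ballI)
    fix i j assume "i \<in> {2..n+1}" "j \<in> {2..n+1}"
    then have "B (mu i * 1) (mu j) + B 1 (mu i * mu j) = 0" using inv by blast
    then show "B (mu i) (mu j) = - B 1 (mu i * mu j)" by (simp add: eq_neg_iff_add_eq_0)
  qed
  obtain y0 where y0: "B 1 y0 \<noteq> 0" using nd one_nz unfolding nondegenerate_def by blast
  obtain e0 d0 where ed0: "e0 \<in> E" "d0 \<in> D" "y0 = e0 + d0" using dec by blast
  have Be0: "B 1 e0 \<noteq> 0" using y0 ed0 B1D Ba2 by simp
  obtain c0 where c0: "e0 - sc c0 1 \<in> M" using res unfolding M_def by blast
  define f where "f = e0 - sc c0 1"
  have fM: "f \<in> M" using c0 f_def by simp
  have fE: "f \<in> E" unfolding f_def using vs.subspace_diff[OF Esub ed0(1) vs.subspace_scale[OF Esub oneE]] .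
  have Bf: "B 1 f \<noteq> 0" unfolding f_def using Be0 by (simp add: Bd2 Bs2 B11)
  have fnz: "f \<noteq> 0" using Bf B02 by auto
  define V0 where "V0 = mu ` {2..n+1}"
  have V0B: "V0 \<subseteq> Bs" unfolding V0_def Bs_def by auto
  have indV0: "vs.independent V0" using vs.independent_mono[OF indep V0B] .
  have spV0D: "vs.span V0 \<subseteq> D" using vs.span_minimal[OF _ Dsub] muD unfolding V0_def by blast
  have V0M: "vs.span V0 \<subseteq> M" using vs.span_minimal[OF _ Msub] muM unfolding V0_def by blast
  have f_nV0: "f \<notin> vs.span V0" using spV0D DE0 fE fnz by blast
  have one_nfV0: "1 \<notin> vs.span (insert f V0)"
  proof
    assume "1 \<in> vs.span (insert f V0)"
    then obtain k where k: "1 - sc k f \<in> vs.span V0" using vs.span_breakdown_eq by blast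
    have "1 - sc k f \<in> E" using vs.subspace_diff[OF Esub oneE vs.subspace_scale[OF Esub fE]] .
    then have "1 - sc k f = 0" using DE0 k spV0D by blast
    then have "1 = sc k f" by simp
    then show False using one_M vs.subspace_scale[OF Msub fM] by metis
  qed
  define S3 where "S3 = insert 1 (insert f V0)"
  have indS3: "vs.independent S3" unfolding S3_def
    by (intro vs.independent_insertI one_nfV0 f_nV0 indV0)
  have cardV0: "card V0 = n" unfolding V0_def
    by (subst card_image) (auto intro: inj_on_subset[OF injmu])
  have "f \<notin> V0" using f_nV0 vs.span_base by blast
  moreover have "1 \<notin> insert f V0" using one_nfV0 vs.span_base by blast
  ultimately have cardS3: "card S3 = n + 2" unfolding S3_def using cardV0
    by (simp add: V0_def)
  have spanS3: "UNIV \<subseteq> vs.span S3"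
    using fd.card_ge_dim_independent[of S3 UNIV] indS3 cardS3 dimR by simp
  have decomp: "\<And>x. \<exists>a b. x - sc a 1 - sc b f \<in> vs.span V0"
  proof -
    fix x :: 'a
    have "x \<in> vs.span S3" using spanS3 by blast
    then obtain a where "x - sc a 1 \<in> vs.span (insert f V0)" unfolding S3_def using vs.span_breakdown_eq by blast
    then obtain b where "x - sc a 1 - sc b f \<in> vs.span V0" using vs.span_breakdown_eq by blast
    then show "\<exists>a b. x - sc a 1 - sc b f \<in> vs.span V0" by blast
  qed
  have EM: "\<And>g. g \<in> E \<Longrightarrow> g \<in> M \<Longrightarrow> \<exists>b. g = sc b f"
  proof -
    fix g assume g: "g \<in> E" "g \<in> M"
    obtain a b where ab: "g - sc a 1 - sc b f \<in> vs.span V0" using decomp by blast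
    have "g - sc a 1 - sc b f \<in> E"
      using vs.subspace_diff[OF Esub vs.subspace_diff[OF Esub g(1) vs.subspace_scale[OF Esub oneE]] vs.subspace_scale[OF Esub fE]] .
    then have z: "g - sc a 1 - sc b f = 0" using DE0 ab spV0D by blast
    then have "sc a 1 = g - sc b f" by (simp add: algebra_simps)
    then have "sc a 1 \<in> M" using vs.subspace_diff[OF Msub g(2) vs.subspace_scale[OF Msub fM]] by simp
    then have "a = 0" using scM one_M by blast
    then show "\<exists>b. g = sc b f" using z by (metis diff_zero eq_iff_diff_eq_0 vs.scale_zero_left)
  qed
  have DM: "\<And>d. d \<in> D \<Longrightarrow> d \<in> M"
  proof -
    fix d assume d: "d \<in> D"
    obtain a b where ab: "d - sc a 1 - sc b f \<in> vs.span V0" using decomp by blast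
    have "sc a 1 + sc b f \<in> E"
      using vs.subspace_add[OF Esub vs.subspace_scale[OF Esub oneE] vs.subspace_scale[OF Esub fE]] .
    moreover have "sc a 1 + sc b f \<in> D"
    proof -
      have "d - (d - sc a 1 - sc b f) \<in> D" using vs.subspace_diff[OF Dsub d] ab spV0D by blast
      then show ?thesis by (simp add: algebra_simps)
    qed
    ultimately have "sc a 1 + sc b f = 0" using DE0 by blast
    then have "d = d - sc a 1 - sc b f" by (simp add: algebra_simps)
    then have "d \<in> vs.span V0" using ab by metis
    then show "d \<in> M" using V0M by blast
  qed
  have ffEM: "f * f \<in> E" "f * f \<in> M" using EE[OF fE fE] Mmul[OF fM] by auto
  obtain cf where cf: "f * f = sc cf f" using EM[OF ffEM] by blast
  have ff0: "f * f = 0"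
  proof (rule ccontr)
    assume nz: "f * f \<noteq> 0"
    then have cfnz: "cf \<noteq> 0" using cf by auto
    define u where "u = sc cf 1 - f"
    have fu: "f * u = 0" unfolding u_def by (simp add: right_diff_distrib cf scm2[symmetric])
    define I0 where "I0 = range (\<lambda>r. r * u)"
    have I0id: "is_ideal I0" unfolding is_ideal_def I0_def
    proof (intro conjI ballI allI)
      show "0 \<in> range (\<lambda>r. r * u)" by (metis mult_zero_left rangeI)
      show "x + y \<in> range (\<lambda>r. r * u)" if "x \<in> range (\<lambda>r. r * u)" "y \<in> range (\<lambda>r. r * u)" for x y
        using that by (auto simp: image_iff distrib_right[symmetric])
      show "r * x \<in> range (\<lambda>r. r * u)" if "x \<in> range (\<lambda>r. r * u)" for r x
        using that by (auto simp: image_iff mult.assoc[symmetric])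
    qed
    have "f \<notin> I0"
    proof
      assume "f \<in> I0"
      then obtain r where "f = r * u" unfolding I0_def by blast
      then have "f * f = r * (f * u)" by (simp add: mult_ac)
      then show False using fu nz by simp
    qed
    then have "I0 \<noteq> UNIV" by blast
    then obtain J where J: "is_maximal_ideal J" "I0 \<subseteq> J"
      using exists_max_ideal[OF fd.finite_dimensional_vector_space_axioms ca I0id] by blast
    then have "J = M" using Muniq unfolding M_def by blast
    moreover have "u \<in> I0" unfolding I0_def by (metis mult_1 rangeI)
    ultimately have "u \<in> M" using J by blast
    then have "sc cf 1 \<in> M" unfolding u_def using vs.subspace_add[OF Msub _ fM] by force
    then show False using scM cfnz one_M by blast
  qed
  have Bff: "B f f = 0"
  proof -
    have "B (f*1) f = B 1 (f*f)" using fE unfolding E_def by blast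
    then show ?thesis by (simp add: ff0 B02)
  qed
  have df0: "\<And>d. d \<in> D \<Longrightarrow> d * f = 0"
  proof -
    fix d assume d: "d \<in> D"
    have "\<forall>y. B (d*f) y = 0"
    proof
      fix y
      obtain e d' where h: "e \<in> E" "d' \<in> D" "y = e + d'" using dec by blast
      have "B (d*f) e = 0" using orth[OF h(1) DE[OF d fE]] Bsym by metis
      moreover have "B (d*f) d' = 0"
      proof -
        have "B (d*f) d' = - B f (d*d')" using d unfolding D_def by blast
        moreover obtain b where "d*d' = sc b f" using EM[OF DD[OF d h(2)] Mmul2[OF DM[OF d]]] by blast
        ultimately show ?thesis by (simp add: Bs2 Bff)
      qed
      ultimately show "B (d*f) y = 0" using h Ba2 by simp
    qed
    then show "d * f = 0" using nd unfolding nondegenerate_def by blast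
  qed
  have Mform: "\<And>x. x \<in> M \<Longrightarrow> \<exists>a d. d \<in> D \<and> x = sc a f + d"
  proof -
    fix x assume x: "x \<in> M"
    obtain e d where h: "e \<in> E" "d \<in> D" "x = e + d" using dec by blast
    have "e \<in> M" using vs.subspace_diff[OF Msub x DM[OF h(2)]] h by simp
    then obtain a where "e = sc a f" using EM h by blast
    then show "\<exists>a d. d \<in> D \<and> x = sc a f + d" using h by blast
  qed
  have prodM: "\<And>x y. x \<in> M \<Longrightarrow> y \<in> M \<Longrightarrow> x * y \<in> vs.span {f}"
  proof -
    fix x y assume xy: "x \<in> M" "y \<in> M"
    obtain a d where hx: "d \<in> D" "x = sc a f + d" using Mform xy by blast
    obtain b d' where hy: "d' \<in> D" "y = sc b f + d'" using Mform xy by blast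
    have fy: "f * y = 0"
    proof -
      have "f * y = sc b (f * f) + f * d'" using hy(2) by (simp add: distrib_left scm2)
      also have "\<dots> = 0" using ff0 df0[OF hy(1)] by (simp add: mult.commute[of f d'])
      finally show ?thesis .
    qed
    have "x * y = sc a (f * y) + d * y" using hx(2) by (simp add: distrib_right scm)
    also have "\<dots> = d * y" using fy by simp
    also have "\<dots> = sc b (d * f) + d * d'" using hy(2) by (simp add: distrib_left scm2)
    also have "\<dots> = d * d'" using df0[OF hx(1)] by simp
    finally have "x * y = d * d'" .
    moreover obtain t where "d * d' = sc t f" using EM[OF DD[OF hx(1) hy(1)] Mmul2[OF DM[OF hx(1)]]] by blast
    ultimately show "x * y \<in> vs.span {f}" unfolding vs.span_singleton by auto
  qed
  have spfE: "vs.span {f} \<subseteq> E" using vs.span_minimal[of "{f}" E] fE Esub by blast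
  have spfM: "vs.span {f} \<subseteq> M" using vs.span_minimal[of "{f}" M] fM Msub by blast
  have pow1: "ideal_pow sc M (Suc 0) = M"
  proof -
    have "{x * y |x y. x \<in> M \<and> y \<in> UNIV} = M"
    proof
      show "{x * y |x y. x \<in> M \<and> y \<in> UNIV} \<subseteq> M" using Mmul2 by blast
      show "M \<subseteq> {x * y |x y. x \<in> M \<and> y \<in> UNIV}"
      proof
        fix x assume "x \<in> M"
        then have "x = x * 1 \<and> x \<in> M \<and> (1::'a) \<in> UNIV" by simp
        then show "x \<in> {x * y |x y. x \<in> M \<and> y \<in> UNIV}" by blast
      qed
    qed
    then have "ideal_pow sc M (Suc 0) = vs.span M" by simp
    also have "\<dots> = M" using Msub vs.span_eq_iff by blast
    finally show ?thesis .
  qed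
  have pow2: "ideal_pow sc M 2 = vs.span {x * y |x y. x \<in> M \<and> y \<in> M}"
    using pow1 by (simp add: numeral_2_eq_2)
  have M2f: "ideal_pow sc M 2 \<subseteq> vs.span {f}"
    unfolding pow2 by (rule vs.span_minimal) (use prodM in auto)
  have prodM2: "\<And>x y. x \<in> M \<Longrightarrow> y \<in> M \<Longrightarrow> x * y \<in> ideal_pow sc M 2"
    unfolding pow2 by (rule vs.span_base) blast
  obtain J2 where J2: "J2 \<subseteq> {1..n+2}" "ideal_pow sc M 2 = vs.span (mu ` J2)"
    using pbJ unfolding M_def by blast
  have J2sub: "J2 \<subseteq> {n+2}"
  proof
    fix k assume k: "k \<in> J2"
    have "mu k \<in> ideal_pow sc M 2" using J2(2) vs.span_base k by blast
    then have mk: "mu k \<in> E" "mu k \<in> M" using M2f spfE spfM by blast+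
    have k1: "k \<in> {1..n+2}" using J2(1) k by blast
    show "k \<in> {n+2}"
    proof (rule ccontr)
      assume "k \<notin> {n+2}"
      then have "k = 1 \<or> k \<in> {2..n+1}" using k1 by auto
      then show False
      proof
        assume "k = 1" then show False using mk one_M mu1 by simp
      next
        assume "k \<in> {2..n+1}"
        then have "mu k = 0" using DE0 muD mk by blast
        then show False using munz k1 by blast
      qed
    qed
  qed
  have J2ne: "J2 \<noteq> {}"
  proof
    assume "J2 = {}"
    then have M2z: "ideal_pow sc M 2 = {0}" using J2 by simp
    have DDz: "\<And>d d'. d \<in> D \<Longrightarrow> d' \<in> D \<Longrightarrow> d * d' = 0"
      using prodM2 DM M2z by blast
    have "\<And>x. x \<in> gen_alg sc (mu ` {2..n+1}) \<Longrightarrow> \<exists>a d. d \<in> D \<and> x = sc a 1 + d"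
    proof -
      fix x assume "x \<in> gen_alg sc (mu ` {2..n+1})"
      then show "\<exists>a d. d \<in> D \<and> x = sc a 1 + d"
      proof (induction rule: gen_alg.induct)
        case one then show ?case using vs.subspace_0[OF Dsub] by (intro exI[of _ 1] exI[of _ 0]) simp
      next
        case (gen s) then show ?case using muD by (intro exI[of _ 0] exI[of _ s]) auto
      next
        case (add x y)
        then obtain a d a' d' where h: "d \<in> D" "x = sc a 1 + d" "d' \<in> D" "y = sc a' 1 + d'" by blast
        show ?case
          by (rule exI[of _ "a + a'"], rule exI[of _ "d + d'"])
             (simp add: h vs.subspace_add[OF Dsub] vs.scale_left_distrib algebra_simps)
      next
        case (mult x y)
        then obtain a d a' d' where h: "d \<in> D" "x = sc a 1 + d" "d' \<in> D" "y = sc a' 1 + d'" by blast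
        have "x * y = sc a 1 * sc a' 1 + sc a 1 * d' + d * sc a' 1 + d * d'"
          using h by (simp add: algebra_simps)
        also have "\<dots> = sc (a * a') 1 + (sc a d' + sc a' d)"
          using DDz[OF h(1) h(3)] by (simp add: scm[symmetric] scm2[symmetric])
        finally show ?case
          using vs.subspace_add[OF Dsub vs.subspace_scale[OF Dsub h(3)] vs.subspace_scale[OF Dsub h(1)]]
          by blast
      next
        case (scale x c)
        then obtain a d where h: "d \<in> D" "x = sc a 1 + d" by blast
        show ?case
          by (rule exI[of _ "c * a"], rule exI[of _ "sc c d"])
             (simp add: h vs.subspace_scale[OF Dsub] vs.scale_right_distrib)
      qed
    qed
    then obtain a d where h: "d \<in> D" "f = sc a 1 + d" using genU by blast
    have "d = f - sc a 1" using h by simp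
    then have "d \<in> E" using vs.subspace_diff[OF Esub fE vs.subspace_scale[OF Esub oneE]] by simp
    then have "d = 0" using DE0 h by blast
    then have "sc a 1 \<in> M" using h fM by simp
    then have "a = 0" using scM one_M by blast
    then show False using h fnz \<open>d = 0\<close> by simp
  qed
  have J2eq: "J2 = {n+2}" using J2sub J2ne by blast
  define m where "m = mu (n+2)"
  have M2eq: "ideal_pow sc M 2 = vs.span {m}" using J2 J2eq m_def by simp
  have mnz: "m \<noteq> 0" using munz m_def by simp
  have "m \<in> vs.span {f}" using M2eq M2f vs.span_base by blast
  then obtain cm where cm: "m = sc cm f" unfolding vs.span_singleton by blast
  have mE: "m \<in> E" using cm vs.subspace_scale[OF Esub fE] by simp
  have cmnz: "cm \<noteq> 0" using mnz cm by auto
  have mm0: "m * m = 0" using cm ff0 by (simp add: scm[symmetric] scm2[symmetric])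
  have Bmm: "B m m = 0"
  proof -
    have "B (m*1) m = B 1 (m*m)" using mE unfolding E_def by blast
    then show ?thesis by (simp add: mm0 B02)
  qed
  have bjm: "\<And>j. j \<in> {2..n+1} \<Longrightarrow> B (mu j) m = 0" using orth[OF mE muD] Bsym by metis
  have P3a: "\<forall>i\<in>{2..n+2}. B (mu i) (mu (n+2)) = 0"
  proof
    fix i assume i: "i \<in> {2..n+2}"
    show "B (mu i) (mu (n+2)) = 0"
    proof (cases "i = n+2")
      case True then show ?thesis using Bmm m_def by simp
    next
      case False then show ?thesis using i bjm m_def by auto
    qed
  qed
  have P3b: "B 1 m \<noteq> 0" using cm Bs2 Bf cmnz by simp
  have P4: "vector_space.dim sc (ideal_pow sc max_ideal 2) = 1"
    using M2eq mnz unfolding M_def by simp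
  have P4b: "ideal_pow sc max_ideal 2 = vs.span {mu (n+2)}" using M2eq m_def M_def by simp
  have expand: "\<And>x. x = (\<Sum>k\<in>{1..n+2}. sc (coord sc n mu x k) (mu k))"
  proof -
    fix x
    have "(\<Sum>b\<in>Bs. sc (vs.representation Bs x b) b) = x"
      using vs.sum_representation_eq[OF indep _ finB order_refl] spanB by simp
    then show "x = (\<Sum>k\<in>{1..n+2}. sc (coord sc n mu x k) (mu k))"
    proof -
      have "(\<Sum>b\<in>mu ` {1..n+2}. sc (vs.representation (mu ` {1..n+2}) x b) b)
          = (\<Sum>k\<in>{1..n+2}. sc (vs.representation (mu ` {1..n+2}) x (mu k)) (mu k))"
        using sum.reindex[OF injmu, of "\<lambda>b. sc (vs.representation (mu ` {1..n+2}) x b) b"]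
        by (simp only: o_def)
      then show ?thesis using \<open>(\<Sum>b\<in>Bs. sc (vs.representation Bs x b) b) = x\<close>
        unfolding coord_def Bs_def by simp
    qed
  qed
  have BsumL: "\<And>K g y. finite K \<Longrightarrow> B (\<Sum>k\<in>K. sc (g k) (mu k)) y = (\<Sum>k\<in>K. g k * B (mu k) y)"
  proof -
    fix K g y show "finite K \<Longrightarrow> B (\<Sum>k\<in>K. sc (g k) (mu k)) y = (\<Sum>k\<in>K. g k * B (mu k) y)"
      by (induction K rule: finite_induct) (simp_all add: B01 Ba1 Bs1)
  qed
  have BsumR: "\<And>K g x. finite K \<Longrightarrow> B x (\<Sum>k\<in>K. sc (g k) (mu k)) = (\<Sum>k\<in>K. g k * B x (mu k))"
  proof -
    fix K g x show "finite K \<Longrightarrow> B x (\<Sum>k\<in>K. sc (g k) (mu k)) = (\<Sum>k\<in>K. g k * B x (mu k))"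
      by (induction K rule: finite_induct) (simp_all add: B02 Ba2 Bs2)
  qed
  have Bexp: "\<And>x y. B x y = (\<Sum>k\<in>{1..n+2}. coord sc n mu x k *
      (\<Sum>l\<in>{1..n+2}. coord sc n mu y l * B (mu k) (mu l)))"
  proof -
    fix x y
    have "B x y = B (\<Sum>k\<in>{1..n+2}. sc (coord sc n mu x k) (mu k)) y"
      using expand[of x] by (rule arg_cong[where f="\<lambda>z. B z y"])
    also have "\<dots> = (\<Sum>k\<in>{1..n+2}. coord sc n mu x k * B (mu k) y)" by (rule BsumL) simp
    also have "\<dots> = (\<Sum>k\<in>{1..n+2}. coord sc n mu x k *
      (\<Sum>l\<in>{1..n+2}. coord sc n mu y l * B (mu k) (mu l)))"
    proof (rule sum.cong[OF refl])
      fix k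
      have "B (mu k) y = B (mu k) (\<Sum>l\<in>{1..n+2}. sc (coord sc n mu y l) (mu l))"
        using expand[of y] by (rule arg_cong[where f="\<lambda>z. B (mu k) z"])
      also have "\<dots> = (\<Sum>l\<in>{1..n+2}. coord sc n mu y l * B (mu k) (mu l))" by (rule BsumR) simp
      finally show "coord sc n mu x k * B (mu k) y = coord sc n mu x k *
        (\<Sum>l\<in>{1..n+2}. coord sc n mu y l * B (mu k) (mu l))" by simp
    qed
    finally show "B x y = (\<Sum>k\<in>{1..n+2}. coord sc n mu x k *
      (\<Sum>l\<in>{1..n+2}. coord sc n mu y l * B (mu k) (mu l)))" .
  qed
  have mB: "m \<in> Bs" unfolding m_def Bs_def by simp
  have coord_m: "\<And>t. coord sc n mu (sc t m) (n+2) = t"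
    using vs.representation_scale[OF indep vs.span_base[OF mB]] vs.representation_basis[OF indep mB]
    unfolding coord_def Bs_def[symmetric] m_def[symmetric] by simp
  have P5: "B 1 (mu (n+2)) = -1 \<longrightarrow> B = B0 sc n mu"
  proof
    assume Bm: "B 1 (mu (n+2)) = -1"
    then have b1m: "B 1 m = -1" using m_def by simp
    have bm1: "B m 1 = -1" using b1m Bsym by metis
    have b1j: "\<And>j. j \<in> {2..n+1} \<Longrightarrow> B 1 (mu j) = 0" using P1 by blast
    have bj1: "\<And>j. j \<in> {2..n+1} \<Longrightarrow> B (mu j) 1 = 0" using P1 Bsym by metis
    have bmj: "\<And>j. j \<in> {2..n+1} \<Longrightarrow> B m (mu j) = 0" using bjm Bsym by metis
    have bij: "\<And>i j. i \<in> {2..n+1} \<Longrightarrow> j \<in> {2..n+1} \<Longrightarrow>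
        B (mu i) (mu j) = coord sc n mu (mu i * mu j) (n+2)"
    proof -
      fix i j assume ij: "i \<in> {2..n+1}" "j \<in> {2..n+1}"
      have "mu i * mu j \<in> vs.span {m}" using prodM2[OF muM[OF ij(1)] muM[OF ij(2)]] M2eq by simp
      then obtain t where t: "mu i * mu j = sc t m" unfolding vs.span_singleton by blast
      have "B (mu i) (mu j) = - B 1 (mu i * mu j)" using P2 ij by blast
      also have "\<dots> = t" using t b1m Bs2 by simp
      finally show "B (mu i) (mu j) = coord sc n mu (mu i * mu j) (n+2)" using t coord_m by simp
    qed
    show "B = B0 sc n mu"
    proof (intro ext)
      fix x y
      let ?cx = "coord sc n mu x" and ?cy = "coord sc n mu y"
      have "B x y = ?cx 1 * (?cy 1 * B 1 1 + ?cy (n+2) * B 1 m + (\<Sum>l\<in>{2..n+1}. ?cy l * B 1 (mu l)))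
          + ?cx (n+2) * (?cy 1 * B m 1 + ?cy (n+2) * B m m + (\<Sum>l\<in>{2..n+1}. ?cy l * B m (mu l)))
          + (\<Sum>k\<in>{2..n+1}. ?cx k * (?cy 1 * B (mu k) 1 + ?cy (n+2) * B (mu k) m
              + (\<Sum>l\<in>{2..n+1}. ?cy l * B (mu k) (mu l))))"
        unfolding Bexp[of x y] by (simp only: split3 mu1 m_def[symmetric])
      also have "\<dots> = - (?cx 1 * ?cy (n+2)) - ?cx (n+2) * ?cy 1
          + (\<Sum>k\<in>{2..n+1}. \<Sum>l\<in>{2..n+1}. coord sc n mu (mu k * mu l) (n+2) * ?cx k * ?cy l)"
      proof -
        have i1: "(\<Sum>l\<in>{2..n+1}. ?cy l * B 1 (mu l)) = 0" by (rule sum.neutral) (simp add: b1j)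
        have i2: "(\<Sum>l\<in>{2..n+1}. ?cy l * B m (mu l)) = 0" by (rule sum.neutral) (simp add: bmj)
        have i3: "(\<Sum>k\<in>{2..n+1}. ?cx k * (?cy 1 * B (mu k) 1 + ?cy (n+2) * B (mu k) m
              + (\<Sum>l\<in>{2..n+1}. ?cy l * B (mu k) (mu l))))
            = (\<Sum>k\<in>{2..n+1}. \<Sum>l\<in>{2..n+1}. coord sc n mu (mu k * mu l) (n+2) * ?cx k * ?cy l)"
        proof (rule sum.cong[OF refl])
          fix k assume k: "k \<in> {2..n+1}"
          have "(\<Sum>l\<in>{2..n+1}. ?cy l * B (mu k) (mu l))
              = (\<Sum>l\<in>{2..n+1}. ?cy l * coord sc n mu (mu k * mu l) (n+2))"
          proof (rule sum.cong[OF refl])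
            fix l assume "l \<in> {2..n+1}"
            then show "?cy l * B (mu k) (mu l) = ?cy l * coord sc n mu (mu k * mu l) (n+2)"
              using bij[OF k] by simp
          qed
          then show "?cx k * (?cy 1 * B (mu k) 1 + ?cy (n+2) * B (mu k) m
              + (\<Sum>l\<in>{2..n+1}. ?cy l * B (mu k) (mu l)))
            = (\<Sum>l\<in>{2..n+1}. coord sc n mu (mu k * mu l) (n+2) * ?cx k * ?cy l)"
            using bj1[OF k] bjm[OF k] by (simp add: sum_distrib_left mult_ac del: sum.cl_ivl_Suc)
        qed
        show ?thesis unfolding i1 i2 i3 B11 b1m bm1 Bmm by (simp add: algebra_simps del: sum.cl_ivl_Suc)
      qed
      also have "\<dots> = B0 sc n mu x y" unfolding B0_def by simp
      finally show "B x y = B0 sc n mu x y" .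
    qed
  qed
  show ?thesis using P1 P2 P3a P3b P4 P4b P5 m_def by simp
qed

end
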